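(* Let $G=(V,E)$ be a $K_4$-free graph and $T=(V,E_t)$ a spanning tree of $G$ such that for every edge $uv\in E$ and every $w\in P_T(u,v)$ we have $uw,vw\in E$. Let $\mathcal C$ be an induced chordless cycle $C_k$ in $G$ with $k\ge 4$, with vertices $c_1,\dots,c_k$. Then there is a vertex $w\notin\{c_1,\dots,c_k\}$ adjacent to all of $c_1,\dots,c_k$ (so $\mathcal C$ and $w$ form a wheel $W_k$), and no edge of $\mathcal C$ belongs to $E_t$.
   Context: All graphs are finite, simple, undirected and connected. For a tree $T$ and vertices $u,v$, $P_T(u,v)$ denotes the set of vertices on the path from $u$ to $v$ in $T$ excluding $u$ and $v$. A chordless cycle $C_k$ consists of vertices $v_1,\dots,v_k$ with edges exactly $v_iv_{i+1}$ (indices mod $k$) among them. A wheel $W_k$ is a $C_k$ plus a vertex adjacent to all its vertices. $K_4$-free means no clique on four vertices. *)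

theory Defs
  imports Main
begin

definition sgraph :: "'a set \<Rightarrow> ('a \<Rightarrow> 'a \<Rightarrow> bool) \<Rightarrow> bool" where
  "sgraph V E \<longleftrightarrow> finite V \<and> (\<forall>u v. E u v \<longrightarrow> u \<in> V \<and> v \<in> V)
     \<and> (\<forall>u v. E u v \<longrightarrow> E v u) \<and> (\<forall>u. \<not> E u u)"

definition walk :: "('a \<Rightarrow> 'a \<Rightarrow> bool) \<Rightarrow> 'a list \<Rightarrow> bool" where
  "walk E xs \<longleftrightarrow> xs \<noteq> [] \<and> (\<forall>i. Suc i < length xs \<longrightarrow> E (xs ! i) (xs ! Suc i))"

definition connected_graph :: "'a set \<Rightarrow> ('a \<Rightarrow> 'a \<Rightarrow> bool) \<Rightarrow> bool" where
  "connected_graph V E \<longleftrightarrow> V \<noteq> {} \<and>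
     (\<forall>u\<in>V. \<forall>v\<in>V. \<exists>xs. walk E xs \<and> hd xs = u \<and> last xs = v)"

definition is_cycle :: "('a \<Rightarrow> 'a \<Rightarrow> bool) \<Rightarrow> 'a list \<Rightarrow> bool" where
  "is_cycle E xs \<longleftrightarrow> length xs \<ge> 3 \<and> distinct xs \<and> walk E xs \<and> E (last xs) (hd xs)"

definition is_tree :: "'a set \<Rightarrow> ('a \<Rightarrow> 'a \<Rightarrow> bool) \<Rightarrow> bool" where
  "is_tree V T \<longleftrightarrow> sgraph V T \<and> connected_graph V T \<and> \<not> (\<exists>xs. is_cycle T xs)"

definition spanning_tree :: "'a set \<Rightarrow> ('a \<Rightarrow> 'a \<Rightarrow> bool) \<Rightarrow> ('a \<Rightarrow> 'a \<Rightarrow> bool) \<Rightarrow> bool" where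
  "spanning_tree V E T \<longleftrightarrow> is_tree V T \<and> (\<forall>u v. T u v \<longrightarrow> E u v)"

definition tree_path_inner :: "('a \<Rightarrow> 'a \<Rightarrow> bool) \<Rightarrow> 'a \<Rightarrow> 'a \<Rightarrow> 'a set" where
  "tree_path_inner T u v = {w. \<exists>xs. walk T xs \<and> distinct xs \<and> hd xs = u \<and> last xs = v
       \<and> w \<in> set xs \<and> w \<noteq> u \<and> w \<noteq> v}"

definition K4_free :: "('a \<Rightarrow> 'a \<Rightarrow> bool) \<Rightarrow> bool" where
  "K4_free E \<longleftrightarrow> \<not> (\<exists>a b c d. E a b \<and> E a c \<and> E a d \<and> E b c \<and> E b d \<and> E c d)"

definition induced_cycle :: "'a set \<Rightarrow> ('a \<Rightarrow> 'a \<Rightarrow> bool) \<Rightarrow> 'a list \<Rightarrow> bool" where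
  "induced_cycle V E cs \<longleftrightarrow> length cs \<ge> 3 \<and> distinct cs \<and> set cs \<subseteq> V \<and>
     (\<forall>i<length cs. \<forall>j<length cs. E (cs ! i) (cs ! j) \<longleftrightarrow>
         (j = Suc i mod length cs \<or> i = Suc j mod length cs))"

end

theory Submission
  imports Defs
begin

lemma walk_single[simp]: "walk R [a]"
  by (simp add: walk_def)

lemma walk_Cons2: "walk R (a # b # xs) \<longleftrightarrow> R a b \<and> walk R (b # xs)"
  unfolding walk_def
proof safe
  fix i assume "\<forall>i. Suc i < length (a # b # xs) \<longrightarrow> R ((a # b # xs) ! i) ((a # b # xs) ! Suc i)"
    "Suc i < length (b # xs)"
  then show "R ((b # xs) ! i) ((b # xs) ! Suc i)" by (metis length_Cons nth_Cons_Suc Suc_less_eq)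
next
  assume "\<forall>i. Suc i < length (a # b # xs) \<longrightarrow> R ((a # b # xs) ! i) ((a # b # xs) ! Suc i)"
  then show "R a b" by auto
next
  fix i assume "R a b" "\<forall>i. Suc i < length (b # xs) \<longrightarrow> R ((b # xs) ! i) ((b # xs) ! Suc i)"
    "Suc i < length (a # b # xs)"
  then show "R ((a # b # xs) ! i) ((a # b # xs) ! Suc i)"
    by (cases i) auto
qed

lemma walk_snoc: "walk R ys \<Longrightarrow> R (last ys) c \<Longrightarrow> walk R (ys @ [c])"
  unfolding walk_def
proof safe
  fix i assume h: "ys \<noteq> []" "\<forall>i. Suc i < length ys \<longrightarrow> R (ys ! i) (ys ! Suc i)"
    "R (last ys) c" "Suc i < length (ys @ [c])"
  show "R ((ys @ [c]) ! i) ((ys @ [c]) ! Suc i)"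
  proof (cases "Suc i < length ys")
    case True then show ?thesis using h by (simp add: nth_append)
  next
    case False
    then have "i = length ys - 1" using h(4) by simp
    then show ?thesis using h by (simp add: nth_append last_conv_nth)
  qed
qed

lemma walk_take: "walk R ys \<Longrightarrow> 0 < n \<Longrightarrow> walk R (take n ys)"
  unfolding walk_def by auto

lemma walk_mono: "walk R xs \<Longrightarrow> (\<And>a b. R a b \<Longrightarrow> S a b) \<Longrightarrow> walk S xs"
  unfolding walk_def by auto

lemma walk_rtranclp: "walk R xs \<Longrightarrow> R\<^sup>*\<^sup>* (hd xs) (last xs)"
proof (induction xs)
  case Nil then show ?case by (simp add: walk_def)
next
  case (Cons a xs)
  show ?case
  proof (cases xs)
    case Nil then show ?thesis by simp
  next
    case (Cons b ys)
    then have "R a b" "walk R xs" using Cons.prems walk_Cons2 by metis+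
    then show ?thesis using Cons.IH \<open>xs = b # ys\<close>
      by (auto intro: converse_rtranclp_into_rtranclp)
  qed
qed

lemma rtranclp_walk: "R\<^sup>*\<^sup>* a b \<Longrightarrow> \<exists>ys. walk R ys \<and> distinct ys \<and> hd ys = a \<and> last ys = b"
proof (induction rule: rtranclp_induct)
  case base
  then show ?case by (intro exI[of _ "[a]"]) simp
next
  case (step b c)
  then obtain ys where ys: "walk R ys" "distinct ys" "hd ys = a" "last ys = b" by blast
  have ne: "ys \<noteq> []" using ys(1) by (simp add: walk_def)
  show ?case
  proof (cases "c \<in> set ys")
    case True
    then obtain i where i: "i < length ys" "ys ! i = c" by (metis in_set_conv_nth)
    have "walk R (take (Suc i) ys)" using walk_take ys(1) by blast
    moreover have "distinct (take (Suc i) ys)" using ys(2) by simp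
    moreover have "hd (take (Suc i) ys) = a" using ys(3) ne by simp
    moreover have "last (take (Suc i) ys) = c"
    proof -
      have "take (Suc i) ys \<noteq> []" using ne by simp
      then have "last (take (Suc i) ys) = take (Suc i) ys ! (length (take (Suc i) ys) - 1)"
        by (rule last_conv_nth)
      also have "\<dots> = ys ! i" using i by (cases "Suc i = length ys") (auto simp: min_def dest: sym)
      finally show ?thesis using i by simp
    qed
    ultimately show ?thesis by blast
  next
    case False
    then show ?thesis using ys ne step(2)
      by (intro exI[of _ "ys @ [c]"]) (simp add: walk_snoc)
  qed
qed

lemma tree_no_bypass:
  assumes "\<not> (\<exists>xs. is_cycle T xs)" "T x y" "x \<noteq> y"
    "(\<lambda>a b. T a b \<and> \<not>(a = x \<and> b = y) \<and> \<not>(a = y \<and> b = x))\<^sup>*\<^sup>* y x"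
  shows False
proof -
  let ?T' = "\<lambda>a b. T a b \<and> \<not>(a = x \<and> b = y) \<and> \<not>(a = y \<and> b = x)"
  obtain ys where ys: "walk ?T' ys" "distinct ys" "hd ys = y" "last ys = x"
    using rtranclp_walk[OF assms(4)] by blast
  have ne: "ys \<noteq> []" using ys(1) by (simp add: walk_def)
  have "length ys \<noteq> 1"
  proof
    assume "length ys = 1"
    then obtain a where "ys = [a]" by (auto simp: length_Suc_conv)
    then show False using ys assms(3) by simp
  qed
  moreover have "length ys \<noteq> 2"
  proof
    assume "length ys = 2"
    then obtain a b where "ys = [a,b]" by (auto simp: length_Suc_conv numeral_2_eq_2)
    then have "?T' y x" using ys by (simp add: walk_Cons2)
    then show False by simp
  qed
  moreover have "length ys \<noteq> 0" using ne by simp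
  ultimately have "length ys \<ge> 3" by linarith
  moreover have "walk T ys" using ys(1) by (rule walk_mono) auto
  ultimately have "is_cycle T ys" using ys assms(2) by (simp add: is_cycle_def)
  then show False using assms(1) by blast
qed

lemma midpoint:
  assumes "sgraph V E" "K4_free E" "spanning_tree V E T"
    "\<forall>u v w. E u v \<longrightarrow> w \<in> tree_path_inner T u v \<longrightarrow> E u w \<and> E v w"
    "E u v" "\<not> T u v"
  shows "\<exists>m. T u m \<and> T m v"
proof -
  have uv: "u \<in> V" "v \<in> V" "u \<noteq> v" using assms(1,5) unfolding sgraph_def by metis+
  have conn: "connected_graph V T" using assms(3) by (simp add: spanning_tree_def is_tree_def)
  then obtain xs where "walk T xs" "hd xs = u" "last xs = v"
    using uv unfolding connected_graph_def by blast
  then have "T\<^sup>*\<^sup>* u v" using walk_rtranclp by metis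
  then obtain ys where ys: "walk T ys" "distinct ys" "hd ys = u" "last ys = v"
    using rtranclp_walk by metis
  have TE: "\<And>a b. T a b \<Longrightarrow> E a b" using assms(3) by (simp add: spanning_tree_def)
  have ne: "ys \<noteq> []" using ys(1) by (simp add: walk_def)
  have y0: "ys ! 0 = u" using ys(3) ne by (simp add: hd_conv_nth)
  have yl: "ys ! (length ys - 1) = v" using ys(4) ne by (simp add: last_conv_nth)
  have adj: "\<And>i. Suc i < length ys \<Longrightarrow> T (ys!i) (ys ! Suc i)" using ys(1) by (simp add: walk_def)
  have l2: "length ys \<ge> 2"
  proof (rule ccontr)
    assume "\<not> ?thesis"
    then have "length ys = 1" using ne by (metis One_nat_def Suc_leI length_greater_0_conv le_antisym not_less_eq_eq numeral_2_eq_2)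
    then show False using y0 yl uv by simp
  qed
  have l3: "length ys \<ge> 3"
  proof (rule ccontr)
    assume "\<not> ?thesis"
    then have "length ys = 2" using l2 by simp
    then show False using adj[of 0] y0 yl assms(6) by simp
  qed
  have inner: "\<And>i. 0 < i \<Longrightarrow> i < length ys - 1 \<Longrightarrow> ys ! i \<in> tree_path_inner T u v"
  proof -
    fix i assume i: "0 < i" "i < length ys - 1"
    have "ys ! i \<noteq> u" using nth_eq_iff_index_eq[OF ys(2), of i 0] i y0 ne by auto
    moreover have "ys ! i \<noteq> v" using nth_eq_iff_index_eq[OF ys(2), of i "length ys - 1"] i yl ne by auto
    moreover have "ys ! i \<in> set ys" using i by simp
    ultimately show "ys ! i \<in> tree_path_inner T u v"
      unfolding tree_path_inner_def using ys by blast
  qed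
  show ?thesis
  proof (cases "length ys = 3")
    case True
    then show ?thesis using adj[of 0] adj[of 1] y0 yl by (auto simp: numeral_2_eq_2)
  next
    case False
    then have l4: "length ys \<ge> 4" using l3 by simp
    have "ys!1 \<in> tree_path_inner T u v" "ys!2 \<in> tree_path_inner T u v"
      using inner l4 by auto
    then have "E u (ys!1)" "E v (ys!1)" "E u (ys!2)" "E v (ys!2)" using assms(4,5) by blast+
    moreover have "E (ys!1) (ys!2)" using TE adj[of 1] l4 by (simp add: numeral_2_eq_2)
    ultimately show ?thesis using assms(2,5) unfolding K4_free_def by blast
  qed
qed

lemma chain:
  assumes "\<And>n. n < N \<Longrightarrow> R (f (s + n)) (f (Suc (s + n))) \<or> (\<exists>m. R (f (s+n)) m \<and> R m (f (Suc (s+n))))"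
  shows "R\<^sup>*\<^sup>* (f s) (f (s + N))"
  using assms
proof (induction N)
  case 0 then show ?case by simp
next
  case (Suc N)
  then have IH: "R\<^sup>*\<^sup>* (f s) (f (s + N))" by simp
  from Suc.prems[of N] show ?case
    using IH by (auto intro: rtranclp.rtrancl_into_rtrancl)
qed

theorem lemma3:
  fixes V :: "'a set" and E T :: "'a \<Rightarrow> 'a \<Rightarrow> bool" and cs :: "'a list"
  assumes "sgraph V E" and "connected_graph V E" and "K4_free E"
    and "spanning_tree V E T"
    and "\<forall>u v w. E u v \<longrightarrow> w \<in> tree_path_inner T u v \<longrightarrow> E u w \<and> E v w"
    and "induced_cycle V E cs" and "length cs \<ge> 4"
  shows "(\<exists>w\<in>V. w \<notin> set cs \<and> (\<forall>c\<in>set cs. E w c))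
         \<and> (\<forall>i<length cs. \<not> T (cs ! i) (cs ! (Suc i mod length cs)))"
proof -
  define k where "k = length cs"
  define c where "c = (\<lambda>n. cs ! (n mod k))"
  have k4: "k \<ge> 4" using assms(7) k_def by simp
  have kpos: "k > 0" using k4 by simp
  have Esym: "\<And>a b. E a b \<Longrightarrow> E b a" and Eirr: "\<And>a. \<not> E a a"
    and EV: "\<And>a b. E a b \<Longrightarrow> a \<in> V"
    using assms(1) unfolding sgraph_def by blast+
  have TE: "\<And>a b. T a b \<Longrightarrow> E a b" using assms(4) by (simp add: spanning_tree_def)
  have nocyc: "\<not> (\<exists>xs. is_cycle T xs)" using assms(4) by (simp add: spanning_tree_def is_tree_def)
  have ic: "\<forall>i<k. \<forall>j<k. E (cs ! i) (cs ! j) \<longleftrightarrow> (j = Suc i mod k \<or> i = Suc j mod k)"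
    and dist: "distinct cs"
    using assms(6) unfolding induced_cycle_def k_def by blast+
  have F1: "\<And>n. E (c n) (c (Suc n))"
  proof -
    fix n
    have "E (cs ! (n mod k)) (cs ! (Suc (n mod k) mod k))"
      using ic kpos by simp
    then show "E (c n) (c (Suc n))" by (simp add: c_def mod_Suc_eq)
  qed
  have F2: "\<And>a b. c a = c b \<Longrightarrow> a mod k = b mod k"
    using dist kpos by (simp add: c_def nth_eq_iff_index_eq k_def)
  have F3: "\<And>a b. E (c a) (c b) \<Longrightarrow> b mod k = Suc a mod k \<or> a mod k = Suc b mod k"
  proof -
    fix a b assume "E (c a) (c b)"
    then have "b mod k = Suc (a mod k) mod k \<or> a mod k = Suc (b mod k) mod k"
      using ic kpos by (simp add: c_def)
    then show "b mod k = Suc a mod k \<or> a mod k = Suc b mod k" by (simp add: mod_Suc_eq)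
  qed
  have F4: "\<And>x. x \<in> set cs \<Longrightarrow> \<exists>n. x = c n"
    by (metis c_def in_set_conv_nth k_def mod_less)
  have cset: "\<And>n. c n \<in> set cs" using kpos by (simp add: c_def k_def)
  have NE: "\<And>a d. 0 < d \<Longrightarrow> d < k \<Longrightarrow> (a + d) mod k \<noteq> a mod k"
  proof
    fix a d assume d: "0 < d" "d < k" "(a + d) mod k = a mod k"
    then have "k dvd d" using mod_eq_dvd_iff_nat[of a "a + d" k] by simp
    then show False using d by (simp add: dvd_imp_le leD)
  qed
  have MA: "\<And>a b d. a mod k = b mod k \<Longrightarrow> (a + d) mod k = (b + d) mod k"
    by (metis mod_add_left_eq)
  have D1: "\<And>m j. E m (c j) \<Longrightarrow> E m (c (Suc j)) \<Longrightarrow> m \<notin> set cs"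
  proof
    fix m j assume h: "E m (c j)" "E m (c (Suc j))" "m \<in> set cs"
    then obtain l where l: "m = c l" using F4 by blast
    have A: "j mod k = Suc l mod k \<or> l mod k = Suc j mod k" using F3 h(1) l by blast
    have B: "Suc j mod k = Suc l mod k \<or> l mod k = Suc (Suc j) mod k" using F3 h(2) l by blast
    from A B show False
    proof (elim disjE)
      assume "j mod k = Suc l mod k" "Suc j mod k = Suc l mod k"
      then have "(j + 1) mod k = j mod k" by simp
      then show False using NE[of 1 j] k4 by simp
    next
      assume a1: "j mod k = Suc l mod k" and a2: "l mod k = Suc (Suc j) mod k"
      have "(l + 1) mod k = (Suc (Suc j) + 1) mod k" using MA[OF a2, of 1] by simp
      then have "(j + 3) mod k = j mod k" using a1 by (simp add: eval_nat_numeral)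
      then show False using NE[of 3 j] k4 by simp
    next
      assume "l mod k = Suc j mod k" "Suc j mod k = Suc l mod k"
      then have "Suc l mod k = l mod k" by simp
      then show False using NE[of 1 l] k4 by simp
    next
      assume "l mod k = Suc j mod k" "l mod k = Suc (Suc j) mod k"
      then have "(Suc j + 1) mod k = Suc j mod k" by simp
      then show False using NE[of 1 "Suc j"] k4 by simp
    qed
  qed
  have link: "\<And>j. T (c j) (c (Suc j)) \<or> (\<exists>m. T (c j) m \<and> T m (c (Suc j)))"
    using midpoint[OF assms(1,3,4,5)] F1 by blast
  have cmod: "\<And>n. c (n + k) = c n" by (simp add: c_def)
  have part2: "\<And>i. \<not> T (c i) (c (Suc i))"
  proof
    fix i assume Ti: "T (c i) (c (Suc i))"
    define x where "x = c i"
    define y where "y = c (Suc i)"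
    let ?T' = "\<lambda>a b. T a b \<and> \<not>(a = x \<and> b = y) \<and> \<not>(a = y \<and> b = x)"
    have "?T'\<^sup>*\<^sup>* (c (Suc i)) (c (Suc i + (k - 1)))"
    proof (rule chain[where f = c and s = "Suc i" and N = "k - 1" and R = ?T'])
      fix n assume n: "n < k - 1"
      define j where "j = Suc i + n"
      have cj_ne_x: "c j \<noteq> x"
      proof
        assume "c j = x"
        then have "(i + (n + 1)) mod k = i mod k" using F2[of j i] unfolding x_def j_def by simp
        then show False using NE[of "n+1" i] n by (simp add: less_diff_conv)
      qed
      have nb: "\<not> (c j = y \<and> c (Suc j) = x)"
      proof
        assume h: "c j = y \<and> c (Suc j) = x"
        then have "(Suc i + n) mod k = Suc i mod k" using F2[of j "Suc i"] unfolding y_def j_def by simp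
        then have "n = 0" using NE[of n "Suc i"] n by (cases "n = 0") (auto simp: less_diff_conv)
        then have "(i + 2) mod k = i mod k" using h F2[of "Suc j" i] unfolding x_def j_def by simp
        then show False using NE[of 2 i] k4 by simp
      qed
      have xy: "x \<in> set cs" "y \<in> set cs" unfolding x_def y_def using cset by auto
      from link[of j] show "?T' (c (Suc i + n)) (c (Suc (Suc i + n))) \<or>
          (\<exists>m. ?T' (c (Suc i + n)) m \<and> ?T' m (c (Suc (Suc i + n))))"
      proof
        assume "T (c j) (c (Suc j))" then show ?thesis using cj_ne_x nb unfolding j_def by auto
      next
        assume "\<exists>m. T (c j) m \<and> T m (c (Suc j))"
        then obtain m where m: "T (c j) m" "T m (c (Suc j))" by blast
        have "m \<notin> set cs" using D1 TE Esym m by blast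
        then have "m \<noteq> x" "m \<noteq> y" using xy by auto
        then show ?thesis using m unfolding j_def by blast
      qed
    qed
    moreover have "c (Suc i + (k - 1)) = c i"
    proof -
      have "Suc i + (k - 1) = i + k" using kpos by simp
      then show ?thesis using cmod[of i] by (simp only:)
    qed
    moreover have "x \<noteq> y" using F1 Eirr unfolding x_def y_def by metis
    ultimately show False using tree_no_bypass[OF nocyc Ti] unfolding x_def y_def by simp
  qed
  have mid: "\<And>j. \<exists>m. T (c j) m \<and> T m (c (Suc j))" using link part2 by blast
  then obtain M where M: "\<And>j. T (c j) (M j) \<and> T (M j) (c (Suc j))" by metis
  have Mout: "\<And>j. M j \<notin> set cs" using D1 M TE Esym by blast
  have Mstep: "\<And>i. M (Suc i) = M i"
  proof (rule ccontr)
    fix i assume ne: "M (Suc i) \<noteq> M i"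
    define z where "z = c (Suc i)"
    define m2 where "m2 = M (Suc i)"
    define m1 where "m1 = M i"
    let ?T' = "\<lambda>a b. T a b \<and> \<not>(a = z \<and> b = m2) \<and> \<not>(a = m2 \<and> b = z)"
    have m2z: "m2 \<noteq> z" "m1 \<noteq> z" using Mout[of "Suc i"] Mout[of i] cset[of "Suc i"] unfolding m2_def m1_def z_def by auto
    have s1: "?T' m2 (c (Suc (Suc i)))"
    proof -
      have "c (Suc (Suc i)) \<noteq> z"
      proof
        assume "c (Suc (Suc i)) = z"
        then have "(Suc i + 1) mod k = Suc i mod k" using F2[of "Suc (Suc i)" "Suc i"] unfolding z_def by simp
        then show False using NE[of 1 "Suc i"] k4 by simp
      qed
      then show ?thesis using M[of "Suc i"] m2z unfolding m2_def by simp
    qed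
    have s2: "?T'\<^sup>*\<^sup>* (c (Suc (Suc i))) (c (Suc (Suc i) + (k - 2)))"
    proof (rule chain[where f = c and s = "Suc (Suc i)" and N = "k - 2" and R = ?T'])
      fix n assume n: "n < k - 2"
      define j where "j = Suc (Suc i) + n"
      have a: "c j \<noteq> z"
      proof
        assume "c j = z"
        then have "(Suc i + (n + 1)) mod k = Suc i mod k" using F2[of j "Suc i"] unfolding z_def j_def by simp
        then show False using NE[of "n+1" "Suc i"] n by (simp add: less_diff_conv)
      qed
      have b: "c (Suc j) \<noteq> z"
      proof
        assume "c (Suc j) = z"
        then have "(Suc i + (n + 2)) mod k = Suc i mod k" using F2[of "Suc j" "Suc i"] unfolding z_def j_def by simp
        then show False using NE[of "n+2" "Suc i"] n by (simp add: less_diff_conv)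
      qed
      have "M j \<noteq> z" "c j \<noteq> m2" using Mout[of j] Mout[of "Suc i"] cset[of j] cset[of "Suc i"] unfolding z_def m2_def by auto
      then have "?T' (c j) (M j) \<and> ?T' (M j) (c (Suc j))" using M[of j] a b by blast
      then show "?T' (c (Suc (Suc i) + n)) (c (Suc (Suc (Suc i) + n))) \<or> (\<exists>m. ?T' (c (Suc (Suc i) + n)) m \<and> ?T' m (c (Suc (Suc (Suc i) + n))))"
        unfolding j_def by blast
    qed
    have ci: "c (Suc (Suc i) + (k - 2)) = c i"
    proof -
      have "Suc (Suc i) + (k - 2) = i + k" using k4 by simp
      then show ?thesis using cmod[of i] by (simp only:)
    qed
    have ciz: "c i \<noteq> z"
    proof
      assume "c i = z"
      then have "(i + 1) mod k = i mod k" using F2[of i "Suc i"] unfolding z_def by simp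
      then show False using NE[of 1 i] k4 by simp
    qed
    have s3: "?T' (c i) m1" using M[of i] ciz Mout[of "Suc i"] cset[of i] unfolding m1_def m2_def by auto
    have s4: "?T' m1 z" using M[of i] m2z ne unfolding m1_def m2_def z_def by auto
    have s2': "?T'\<^sup>*\<^sup>* (c (Suc (Suc i))) (c i)" using s2 ci by simp
    have t1: "?T'\<^sup>*\<^sup>* m2 (c i)" using converse_rtranclp_into_rtranclp[of ?T', OF s1 s2'] .
    have t2: "?T'\<^sup>*\<^sup>* m2 m1" using rtranclp.rtrancl_into_rtrancl[of ?T', OF t1 s3] .
    have "?T'\<^sup>*\<^sup>* m2 z" using rtranclp.rtrancl_into_rtrancl[of ?T', OF t2 s4] .
    then show False using tree_no_bypass[OF nocyc _ m2z(1)[symmetric]] M[of "Suc i"]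
      unfolding z_def m2_def by blast
  qed
  have Mconst: "\<And>j. M j = M 0"
  proof -
    fix j show "M j = M 0" by (induction j) (simp_all add: Mstep)
  qed
  have "M 0 \<in> V" using M[of 0] TE EV Esym by blast
  moreover have "M 0 \<notin> set cs" using Mout by blast
  moreover have "\<forall>x\<in>set cs. E (M 0) x"
  proof
    fix x assume "x \<in> set cs"
    then obtain n where "x = c n" using F4 by blast
    then show "E (M 0) x" using M[of n] TE Esym Mconst[of n] by metis
  qed
  moreover have "\<forall>i<length cs. \<not> T (cs ! i) (cs ! (Suc i mod length cs))"
  proof (intro allI impI)
    fix i assume "i < length cs"
    then have "cs ! i = c i" "cs ! (Suc i mod length cs) = c (Suc i)"
      by (simp_all add: c_def k_def)
    then show "\<not> T (cs ! i) (cs ! (Suc i mod length cs))" using part2 by simp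
  qed
  ultimately show ?thesis by blast
qed

end
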